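(* Let $m$ be a positive integer and $\theta_1,\dots,\theta_{2m}$ pairwise distinct numbers in $(0,\pi)$ with $\theta_{2m+1-i}=\pi-\theta_i$ for $i=1,\dots,m$. For $\alpha\in\{0,1\}$ let $\phi_j^\alpha=(2j+\alpha)\pi/(2m)$, and for $i=1,\dots,2m$ let $$w_i=\int_{-1}^1\prod_{k=1,k\ne i}^{2m}\frac{t-\cos\theta_k}{\cos\theta_i-\cos\theta_k}\,dt.$$ Then for every $T\in\Pi_{2m-1}(\mathbb{S}^2)$, $$\int_{\mathbb{S}^2}T(\xi)\,d\omega(\xi)=\frac{\pi}{m}\sum_{i=1}^m w_i\sum_{j=0}^{2m-1}\widetilde T(\theta_i,\phi_j^0)+\frac{\pi}{m}\sum_{i=m+1}^{2m}w_i\sum_{j=0}^{2m-1}\widetilde T(\theta_i,\phi_j^1).$$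
   Context: $\mathbb{S}^2$ is the unit sphere in $\mathbb{R}^3$ and $d\omega$ its surface area measure, so that $\int_{\mathbb{S}^2}T\,d\omega=\int_0^\pi\int_0^{2\pi}\widetilde T(\theta,\phi)\sin\theta\,d\phi\,d\theta$. $\Pi_n(\mathbb{S}^2)$ is the space of restrictions to $\mathbb{S}^2$ of real polynomials in $x,y,z$ of total degree at most $n$, and $\widetilde T(\theta,\phi)=T(\sin\theta\cos\phi,\sin\theta\sin\phi,\cos\theta)$. *)

theory Defs
  imports "HOL-Analysis.Analysis"
begin

definition sphere_poly :: "nat \<Rightarrow> (real \<Rightarrow> real \<Rightarrow> real \<Rightarrow> real) \<Rightarrow> bool" where
  "sphere_poly n T \<longleftrightarrow>
     (\<exists>c :: nat \<Rightarrow> nat \<Rightarrow> nat \<Rightarrow> real. \<forall>x y z. x\<^sup>2 + y\<^sup>2 + z\<^sup>2 = 1 \<longrightarrow>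
        T x y z = (\<Sum>(a, b, d) \<in> {(a, b, d). a + b + d \<le> n}. c a b d * x ^ a * y ^ b * z ^ d))"

definition sph :: "(real \<Rightarrow> real \<Rightarrow> real \<Rightarrow> real) \<Rightarrow> real \<Rightarrow> real \<Rightarrow> real" where
  "sph T \<theta> \<phi> = T (sin \<theta> * cos \<phi>) (sin \<theta> * sin \<phi>) (cos \<theta>)"

definition sphere_integral :: "(real \<Rightarrow> real \<Rightarrow> real \<Rightarrow> real) \<Rightarrow> real" where
  "sphere_integral T = integral {0..pi} (\<lambda>\<theta>. integral {0..2*pi} (\<lambda>\<phi>. sph T \<theta> \<phi> * sin \<theta>))"

end

theory Submission
  imports Defs "HOL-Computational_Algebra.Polynomial"
begin

lemma int_cos0:
  fixes k :: int assumes "k \<noteq> 0"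
  shows "((\<lambda>x. cos (of_int k * x)) has_integral 0) {0..2*pi}"
proof -
  have "((\<lambda>x. cos (of_int k * x)) has_integral (sin (of_int k * (2*pi)) / k - sin (of_int k * 0) / k)) {0..2*pi}"
  proof (rule fundamental_theorem_of_calculus)
    fix x assume "x \<in> {0..2*pi}"
    have "((\<lambda>x. sin (of_int k * x) / k) has_real_derivative cos (of_int k * x)) (at x within {0..2*pi})"
      using assms by (auto intro!: derivative_eq_intros)
    then show "((\<lambda>x. sin (of_int k * x) / k) has_vector_derivative cos (of_int k * x)) (at x within {0..2*pi})"
      by (simp add: has_real_derivative_iff_has_vector_derivative)
  qed simp
  moreover have "sin (of_int k * (2*pi)) = 0"
    using sin_integer_2pi[of "of_int k"] by (simp add: mult.commute)
  ultimately show ?thesis by simp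
qed

lemma int_sin0:
  fixes k :: int assumes "k \<noteq> 0"
  shows "((\<lambda>x. sin (of_int k * x)) has_integral 0) {0..2*pi}"
proof -
  have "((\<lambda>x. sin (of_int k * x)) has_integral (- cos (of_int k * (2*pi)) / k - (- cos (of_int k * 0) / k))) {0..2*pi}"
  proof (rule fundamental_theorem_of_calculus)
    fix x assume "x \<in> {0..2*pi}"
    have "((\<lambda>x. - cos (of_int k * x) / k) has_real_derivative sin (of_int k * x)) (at x within {0..2*pi})"
      using assms by (auto intro!: derivative_eq_intros)
    then show "((\<lambda>x. - cos (of_int k * x) / k) has_vector_derivative sin (of_int k * x)) (at x within {0..2*pi})"
      by (simp add: has_real_derivative_iff_has_vector_derivative)
  qed simp
  moreover have "cos (of_int k * (2*pi)) = 1"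
    using cos_integer_2pi[of "of_int k"] by (simp add: mult.commute)
  ultimately show ?thesis by simp
qed

lemma Re_c_cis: "Re (c * cis t) = Re c * cos t - Im c * sin t"
  by simp

lemma int_single0:
  fixes k :: int assumes "k \<noteq> 0"
  shows "((\<lambda>x. Re (c * cis (of_int k * x))) has_integral 0) {0..2*pi}"
proof -
  have "((\<lambda>x. Re c * cos (of_int k * x) - Im c * sin (of_int k * x)) has_integral (Re c * 0 - Im c * 0)) {0..2*pi}"
    by (intro has_integral_diff has_integral_mult_right int_cos0 int_sin0 assms)
  then show ?thesis by simp
qed

lemma cis_ne_1:
  fixes k :: int assumes "k \<noteq> 0" "\<bar>k\<bar> < int N"
  shows "cis (2*pi*k/N) \<noteq> 1"
proof
  assume "cis (2*pi*k/N) = 1"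
  then have "cos (2*pi*k/N) = 1" by (metis cis.sel(1) one_complex.sel(1))
  then obtain n :: int where n: "2*pi*k/N = n*2*pi" by (auto simp: cos_one_2pi_int)
  have N0: "N > 0" using assms by linarith
  then have "real_of_int k = real_of_int n * real N" using n by (simp add: field_simps)
  then have kn: "k = n * int N" by (metis of_int_eq_iff of_int_mult of_int_of_nat_eq)
  show False
  proof (cases "n = 0")
    case True then show False using kn assms by simp
  next
    case False then have "\<bar>n\<bar> \<ge> 1" by linarith
    then have "\<bar>n\<bar> * int N \<ge> int N" using N0 by (simp add: mult_le_cancel_right1)
    then show False using kn assms by (simp add: abs_mult)
  qed
qed

lemma sum_cis0:
  fixes k :: int assumes "k \<noteq> 0" "\<bar>k\<bar> < int N"
  shows "(\<Sum>j<N. cis (of_int k * (s + 2*pi*real j/N))) = 0"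
proof -
  define w where "w = cis (2*pi*k/N)"
  have N0: "N > 0" using assms by linarith
  have "cis (of_int k * (s + 2*pi*real j/N)) = cis (of_int k * s) * w ^ j" for j
  proof -
    have "w ^ j = cis (real j * (2*pi*k/N))" unfolding w_def by (rule Complex.DeMoivre)
    then have "cis (of_int k * s) * w ^ j = cis (of_int k * s + real j * (2*pi*k/N))"
      by (simp add: cis_mult)
    also have "of_int k * s + real j * (2*pi*k/N) = of_int k * (s + 2*pi*real j/N)"
      by (simp add: algebra_simps)
    finally show ?thesis by simp
  qed
  then have "(\<Sum>j<N. cis (of_int k * (s + 2*pi*real j/N))) = cis (of_int k * s) * (\<Sum>j<N. w ^ j)"
    by (simp add: sum_distrib_left)
  moreover have "w ^ N = 1"
  proof -
    have "w ^ N = cis (2 * pi * of_int k)" unfolding w_def Complex.DeMoivre using N0 by simp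
    also have "\<dots> = 1" by (rule cis_multiple_2pi) simp
    finally show ?thesis .
  qed
  moreover have "w \<noteq> 1" using cis_ne_1[OF assms] w_def by simp
  ultimately show ?thesis by (simp add: sum_gp_strict)
qed

lemma trig_single:
  fixes k :: int assumes "N > 0" "\<bar>k\<bar> < int N"
  shows "((\<lambda>x. Re (c * cis (of_int k * x))) has_integral
     (2*pi/N) * (\<Sum>j<N. Re (c * cis (of_int k * (s + 2*pi*real j/N)))))  {0..2*pi}"
proof (cases "k = 0")
  case True
  have "((\<lambda>x. Re c) has_integral (2*pi * Re c)) {0..2*pi}"
    using has_integral_const_real[of "Re c" 0 "2*pi"] by simp
  then show ?thesis using True assms by (simp add: mult.assoc)
next
  case False
  have "(\<Sum>j<N. Re (c * cis (of_int k * (s + 2*pi*real j/N)))) = Re (c * (\<Sum>j<N. cis (of_int k * (s + 2*pi*real j/N))))"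
    by (simp add: sum_distrib_left Re_sum)
  also have "\<dots> = 0" using sum_cis0[OF False assms(2)] by simp
  finally show ?thesis using int_single0[OF False] by simp
qed

definition Cf :: "nat \<Rightarrow> nat \<Rightarrow> nat \<Rightarrow> nat \<Rightarrow> complex" where
  "Cf a b p q = of_nat (a choose p) * of_nat (b choose q) * (-1) ^ (b - q) / (2 ^ a * (2 * \<i>) ^ b)"

lemma cis_pow_pair:
  assumes "p \<le> a"
  shows "cis x ^ p * cis (-x) ^ (a - p) = cis (of_int (2 * int p - int a) * x)"
proof -
  have "cis x ^ p * cis (-x) ^ (a - p) = cis (real p * x + real (a - p) * (-x))"
    by (simp add: Complex.DeMoivre cis_mult)
  also have "real p * x + real (a - p) * (-x) = of_int (2 * int p - int a) * x"
    using assms by (simp add: of_nat_diff algebra_simps)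
  finally show ?thesis .
qed

lemma expand:
  "complex_of_real (cos x ^ a * sin x ^ b) =
     (\<Sum>p\<le>a. \<Sum>q\<le>b. Cf a b p q * cis (of_int (2 * int p + 2 * int q - int a - int b) * x))"
proof -
  have c: "complex_of_real (cos x) = (cis x + cis (-x)) / 2" by (simp add: complex_eq_iff)
  have s0: "cis x + - cis (-x) = 2 * \<i> * complex_of_real (sin x)" by (simp add: complex_eq_iff)
  have s: "complex_of_real (sin x) = (cis x + - cis (-x)) / (2 * \<i>)" by (subst s0) simp
  have "complex_of_real (cos x ^ a * sin x ^ b) = (cis x + cis (-x)) ^ a * (cis x + - cis (-x)) ^ b / (2 ^ a * (2 * \<i>) ^ b)"
  proof -
    have "complex_of_real (cos x ^ a * sin x ^ b) = complex_of_real (cos x) ^ a * complex_of_real (sin x) ^ b" by simp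
    also have "\<dots> = ((cis x + cis (-x)) / 2) ^ a * ((cis x + - cis (-x)) / (2 * \<i>)) ^ b" by (simp only: c s)
    also have "\<dots> = (cis x + cis (-x)) ^ a * (cis x + - cis (-x)) ^ b / (2 ^ a * (2 * \<i>) ^ b)"
      by (simp only: power_divide times_divide_times_eq)
    finally show ?thesis .
  qed
  also have "(cis x + cis (-x)) ^ a = (\<Sum>p\<le>a. of_nat (a choose p) * cis (of_int (2 * int p - int a) * x))"
    by (simp add: binomial_ring mult.assoc cis_pow_pair)
  also have "(cis x + - cis (-x)) ^ b = (\<Sum>q\<le>b. of_nat (b choose q) * cis x ^ q * (- cis (-x)) ^ (b - q))"
    by (rule binomial_ring)
  also have "\<dots> = (\<Sum>q\<le>b. of_nat (b choose q) * (-1) ^ (b - q) * cis (of_int (2 * int q - int b) * x))"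
  proof (intro sum.cong refl)
    fix q assume "q \<in> {..b}" then have qb: "q \<le> b" by simp
    have "of_nat (b choose q) * cis x ^ q * (- cis (-x)) ^ (b - q) =
       of_nat (b choose q) * (-1) ^ (b - q) * (cis x ^ q * cis (-x) ^ (b - q))"
      using power_minus[of "cis (-x)" "b - q"] by (simp only: mult_ac)
    then show "of_nat (b choose q) * cis x ^ q * (- cis (-x)) ^ (b - q) = of_nat (b choose q) * (-1) ^ (b - q) * cis (of_int (2 * int q - int b) * x)"
      using cis_pow_pair[OF qb] by simp
  qed
  also have "(\<Sum>p\<le>a. of_nat (a choose p) * cis (of_int (2 * int p - int a) * x)) *
     (\<Sum>q\<le>b. of_nat (b choose q) * (-1) ^ (b - q) * cis (of_int (2 * int q - int b) * x)) / (2 ^ a * (2 * \<i>) ^ b)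
     = (\<Sum>p\<le>a. \<Sum>q\<le>b. Cf a b p q * (cis (of_int (2 * int p - int a) * x) * cis (of_int (2 * int q - int b) * x)))"
    unfolding sum_product sum_divide_distrib
  proof (intro sum.cong refl)
    fix p q
    show "of_nat (a choose p) * cis (of_int (2 * int p - int a) * x) *
         (of_nat (b choose q) * (-1) ^ (b - q) * cis (of_int (2 * int q - int b) * x)) / (2 ^ a * (2 * \<i>) ^ b) =
         Cf a b p q * (cis (of_int (2 * int p - int a) * x) * cis (of_int (2 * int q - int b) * x))"
      unfolding Cf_def by (simp only: times_divide_eq_left times_divide_eq_right mult_ac)
  qed
  also have "\<dots> = (\<Sum>p\<le>a. \<Sum>q\<le>b. Cf a b p q * cis (of_int (2 * int p + 2 * int q - int a - int b) * x))"
    by (intro sum.cong refl) (simp add: cis_mult algebra_simps)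
  finally show ?thesis .
qed

lemma swap3: "(\<Sum>p\<in>A. \<Sum>q\<in>B. (c::real) * (\<Sum>j\<in>C. f p q j)) = c * (\<Sum>j\<in>C. \<Sum>p\<in>A. \<Sum>q\<in>B. f p q j)"
proof -
  have "(\<Sum>p\<in>A. \<Sum>q\<in>B. c * (\<Sum>j\<in>C. f p q j)) = c * (\<Sum>p\<in>A. \<Sum>q\<in>B. \<Sum>j\<in>C. f p q j)"
    by (simp add: sum_distrib_left)
  also have "(\<Sum>p\<in>A. \<Sum>q\<in>B. \<Sum>j\<in>C. f p q j) = (\<Sum>p\<in>A. \<Sum>j\<in>C. \<Sum>q\<in>B. f p q j)"
    by (rule sum.cong[OF refl], rule sum.swap)
  also have "\<dots> = (\<Sum>j\<in>C. \<Sum>p\<in>A. \<Sum>q\<in>B. f p q j)" by (rule sum.swap)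
  finally show ?thesis .
qed

lemma expand_re:
  "cos x ^ a * sin x ^ b =
     (\<Sum>p\<le>a. \<Sum>q\<le>b. Re (Cf a b p q * cis (of_int (2 * int p + 2 * int q - int a - int b) * x)))"
proof -
  have "cos x ^ a * sin x ^ b = Re (complex_of_real (cos x ^ a * sin x ^ b))" by simp
  also have "\<dots> = (\<Sum>p\<le>a. \<Sum>q\<le>b. Re (Cf a b p q * cis (of_int (2 * int p + 2 * int q - int a - int b) * x)))"
    unfolding expand by (simp add: Re_sum)
  finally show ?thesis .
qed

lemma quad:
  assumes "N > 0" "a + b < N"
  shows "((\<lambda>x. cos x ^ a * sin x ^ b) has_integral
     (2*pi/N) * (\<Sum>j<N. cos (s + 2*pi*real j/N) ^ a * sin (s + 2*pi*real j/N) ^ b)) {0..2*pi}"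
proof -
  have "((\<lambda>x. \<Sum>p\<le>a. \<Sum>q\<le>b. Re (Cf a b p q * cis (of_int (2 * int p + 2 * int q - int a - int b) * x))) has_integral
     (\<Sum>p\<le>a. \<Sum>q\<le>b. (2*pi/N) * (\<Sum>j<N. Re (Cf a b p q * cis (of_int (2 * int p + 2 * int q - int a - int b) * (s + 2*pi*real j/N)))))) {0..2*pi}"
  proof (intro has_integral_sum finite_atMost trig_single assms(1))
    fix p q assume "p \<in> {..a}" "q \<in> {..b}"
    then show "\<bar>2 * int p + 2 * int q - int a - int b\<bar> < int N" using assms(2) by auto
  qed
  also have "(\<Sum>p\<le>a. \<Sum>q\<le>b. (2*pi/N) * (\<Sum>j<N. Re (Cf a b p q * cis (of_int (2 * int p + 2 * int q - int a - int b) * (s + 2*pi*real j/N)))))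
     = (2*pi/N) * (\<Sum>j<N. cos (s + 2*pi*real j/N) ^ a * sin (s + 2*pi*real j/N) ^ b)"
    unfolding swap3 expand_re[of "s + 2*pi*real _/N"] ..
  finally show ?thesis unfolding expand_re[symmetric] .
qed

lemma odd_zero:
  assumes "odd (a + b)"
  shows "((\<lambda>x. cos x ^ a * sin x ^ b) has_integral 0) {0..2*pi}"
proof -
  have "((\<lambda>x. \<Sum>p\<le>a. \<Sum>q\<le>b. Re (Cf a b p q * cis (of_int (2 * int p + 2 * int q - int a - int b) * x))) has_integral
     (\<Sum>p\<le>a. \<Sum>q\<le>b. 0)) {0..2*pi}"
  proof (intro has_integral_sum finite_atMost int_single0)
    fix p q
    show "2 * int p + 2 * int q - int a - int b \<noteq> 0"
    proof
      assume "2 * int p + 2 * int q - int a - int b = 0"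
      then have "int (a + b) = 2 * int (p + q)" by simp
      then have "a + b = 2 * (p + q)" by linarith
      then show False using assms by simp
    qed
  qed
  then show ?thesis unfolding expand_re[symmetric] by simp
qed

lemma interp:
  fixes t :: "nat \<Rightarrow> real" and P :: "real poly" and M :: nat
  assumes inj: "inj_on t {1..M}" and deg: "degree P < M"
  shows "poly P x = (\<Sum>i\<in>{1..M}. poly P (t i) * (\<Prod>k\<in>{1..M}-{i}. (x - t k) / (t i - t k)))"
proof -
  define Lp where "Lp i = (\<Prod>k\<in>{1..M}-{i}. smult (1 / (t i - t k)) [:- t k, 1:])" for i
  have pL: "poly (Lp i) y = (\<Prod>k\<in>{1..M}-{i}. (y - t k) / (t i - t k))" for i y
    unfolding Lp_def poly_prod by (intro prod.cong refl) (simp add: diff_divide_distrib)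
  define Q where "Q = (\<Sum>i\<in>{1..M}. smult (poly P (t i)) (Lp i))"
  have pQ: "poly Q y = (\<Sum>i\<in>{1..M}. poly P (t i) * (\<Prod>k\<in>{1..M}-{i}. (y - t k) / (t i - t k)))" for y
    unfolding Q_def poly_sum by (simp add: pL)
  have degL: "degree (Lp i) \<le> M - 1" if "i \<in> {1..M}" for i
  proof -
    have "degree (Lp i) \<le> sum (degree \<circ> (\<lambda>k. smult (1 / (t i - t k)) [:- t k, 1:])) ({1..M}-{i})"
      unfolding Lp_def by (rule degree_prod_sum_le) simp
    also have "\<dots> \<le> of_nat (card ({1..M}-{i})) * 1"
    proof (rule sum_bounded_above)
      fix k
      have "degree (smult (1 / (t i - t k)) [:- t k, 1:]) \<le> degree [:- t k, 1:]" by (rule degree_smult_le)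
      then show "(degree \<circ> (\<lambda>k. smult (1 / (t i - t k)) [:- t k, 1:])) k \<le> 1" by simp
    qed
    also have "card ({1..M}-{i}) = M - 1" using that by simp
    finally show ?thesis by simp
  qed
  have degQ: "degree Q < M"
  proof -
    have "degree Q \<le> M - 1"
      unfolding Q_def
    proof (rule degree_sum_le)
      fix i assume "i \<in> {1..M}"
      have "degree (smult (poly P (t i)) (Lp i)) \<le> degree (Lp i)" by (rule degree_smult_le)
      then show "degree (smult (poly P (t i)) (Lp i)) \<le> M - 1" using degL[OF \<open>i \<in> {1..M}\<close>] by linarith
    qed simp
    then show ?thesis using deg by linarith
  qed
  have nodes: "poly P y = poly Q y" if "y \<in> t ` {1..M}" for y
  proof -
    obtain j where j: "j \<in> {1..M}" "y = t j" using \<open>y \<in> t ` {1..M}\<close> by auto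
    have "poly P (t i) * (\<Prod>k\<in>{1..M}-{i}. (t j - t k) / (t i - t k)) = (if i = j then poly P (t j) else 0)"
      if i: "i \<in> {1..M}" for i
    proof (cases "i = j")
      case True
      have "(\<Prod>k\<in>{1..M}-{i}. (t j - t k) / (t i - t k)) = (\<Prod>k\<in>{1..M}-{i}. 1)"
      proof (intro prod.cong refl)
        fix k assume "k \<in> {1..M}-{i}"
        then have "t i \<noteq> t k" using inj i by (auto dest: inj_onD)
        then show "(t j - t k) / (t i - t k) = 1" using True by simp
      qed
      then show ?thesis using True by simp
    next
      case False
      have "(\<Prod>k\<in>{1..M}-{i}. (t j - t k) / (t i - t k)) = 0"
        by (rule prod_zero) (use j False in auto)
      then show ?thesis using False by simp
    qed
    then have "poly Q y = (\<Sum>i\<in>{1..M}. (if i = j then poly P (t j) else 0))"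
      unfolding pQ j(2) by (intro sum.cong refl) auto
    also have "\<dots> = poly P y" using j by simp
    finally show ?thesis by simp
  qed
  have card: "card (t ` {1..M}) = M" using inj by (simp add: card_image)
  have "P = Q" by (rule poly_eqI_degree[OF nodes]) (use card deg degQ in auto)
  then have "poly P x = poly Q x" by simp
  also have "\<dots> = (\<Sum>i\<in>{1..M}. poly P (t i) * (\<Prod>k\<in>{1..M}-{i}. (x - t k) / (t i - t k)))" by (rule pQ)
  finally show ?thesis .
qed

lemma subst_int:
  "integral {0..pi} (\<lambda>th. poly P (cos th) * sin th) = integral {-1..1} (poly P)"
proof -
  have "((\<lambda>x. sin x *\<^sub>R poly P (- (- cos x))) has_integral integral {- cos 0..- cos pi} (\<lambda>u. poly P (- u))) {0..pi}"
  proof (rule has_integral_substitution[where c = "-1" and d = 1])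
    show "(\<lambda>x. - cos x) ` {0..pi} \<subseteq> {-1..1}" by auto
    show "continuous_on {-1..1} (\<lambda>u. poly P (- u))" by (intro continuous_intros)
    fix x assume "x \<in> {0..pi}"
    show "((\<lambda>x. - cos x) has_real_derivative sin x) (at x within {0..pi})"
      by (auto intro!: derivative_eq_intros)
  qed auto
  then have "((\<lambda>x. poly P (cos x) * sin x) has_integral integral {-1..1} (\<lambda>u. poly P (- u))) {0..pi}"
    by (simp add: mult.commute)
  moreover have "integral {-1..1} (\<lambda>u. poly P (- u)) = integral {-1..1} (poly P)"
    using Henstock_Kurzweil_Integration.integral_reflect_real[of 1 "-1" "poly P"] by simp
  ultimately show ?thesis by (simp add: integral_unique)
qed

lemma finite_S: "finite {(a, b, d). a + b + d \<le> (n::nat)}"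
proof -
  have "{(a, b, d). a + b + d \<le> n} \<subseteq> {..n} \<times> {..n} \<times> {..n}" by auto
  then show ?thesis by (rule finite_subset) auto
qed

lemma sph_expand:
  assumes hc: "\<forall>x y z. x\<^sup>2 + y\<^sup>2 + z\<^sup>2 = 1 \<longrightarrow>
        T x y z = (\<Sum>(a, b, d) \<in> S. c a b d * x ^ a * y ^ b * z ^ d)"
  shows "sph T th ph = (\<Sum>(a, b, d) \<in> S. c a b d * (sin th ^ (a + b) * cos th ^ d) * (cos ph ^ a * sin ph ^ b))"
proof -
  have "(sin th * cos ph)\<^sup>2 + (sin th * sin ph)\<^sup>2 + (cos th)\<^sup>2 = (sin th)\<^sup>2 * ((sin ph)\<^sup>2 + (cos ph)\<^sup>2) + (cos th)\<^sup>2"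
    by (simp only: power_mult_distrib distrib_left mult.commute)
  also have "\<dots> = 1" by simp
  finally have "sph T th ph = (\<Sum>(a, b, d) \<in> S. c a b d * (sin th * cos ph) ^ a * (sin th * sin ph) ^ b * (cos th) ^ d)"
    unfolding sph_def using hc by blast
  also have "\<dots> = (\<Sum>(a, b, d) \<in> S. c a b d * (sin th ^ (a + b) * cos th ^ d) * (cos ph ^ a * sin ph ^ b))"
    by (intro sum.cong refl) (auto simp: power_mult_distrib power_add)
  finally show ?thesis .
qed

theorem proposition3p2:
  fixes m :: nat and \<theta> :: "nat \<Rightarrow> real" and T :: "real \<Rightarrow> real \<Rightarrow> real \<Rightarrow> real"
  assumes "m > 0"
    and "\<forall>i\<in>{1..2*m}. 0 < \<theta> i \<and> \<theta> i < pi"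
    and "inj_on \<theta> {1..2*m}"
    and "\<forall>i\<in>{1..m}. \<theta> (2*m + 1 - i) = pi - \<theta> i"
    and "sphere_poly (2*m - 1) T"
  shows "sphere_integral T =
      pi / m * (\<Sum>i=1..m. integral {-1..1} (\<lambda>t. \<Prod>k\<in>{1..2*m} - {i}. (t - cos (\<theta> k)) / (cos (\<theta> i) - cos (\<theta> k)))
                 * (\<Sum>j=0..2*m-1. sph T (\<theta> i) ((2 * real j + 0) * pi / (2 * m))))
    + pi / m * (\<Sum>i=m+1..2*m. integral {-1..1} (\<lambda>t. \<Prod>k\<in>{1..2*m} - {i}. (t - cos (\<theta> k)) / (cos (\<theta> i) - cos (\<theta> k)))
                 * (\<Sum>j=0..2*m-1. sph T (\<theta> i) ((2 * real j + 1) * pi / (2 * m))))"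
proof -
  define S where "S = {(a, b, d). a + b + d \<le> 2*m - 1}"
  from assms(5) obtain c where hc: "\<forall>x y z. x\<^sup>2 + y\<^sup>2 + z\<^sup>2 = 1 \<longrightarrow>
        T x y z = (\<Sum>(a, b, d) \<in> S. c a b d * x ^ a * y ^ b * z ^ d)"
    unfolding sphere_poly_def S_def by blast
  have finS: "finite S" unfolding S_def by (rule finite_S)
  have N: "2 * m > 0" using assms(1) by simp
  have Sab: "a + b < 2 * m" "a + b + d \<le> 2 * m - 1" if "(a, b, d) \<in> S" for a b d
    using that assms(1) unfolding S_def by auto
  define I where "I a b = integral {0..2*pi} (\<lambda>x. cos x ^ a * sin x ^ b)" for a b
  have hI: "((\<lambda>x. cos x ^ a * sin x ^ b) has_integral I a b) {0..2*pi}" if "a + b < 2 * m" for a b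
    using quad[OF N that, of 0] unfolding I_def by (simp add: integral_unique)
  have hQ: "I a b = pi / m * (\<Sum>j<2*m. cos (s + 2*pi*real j/real (2*m)) ^ a * sin (s + 2*pi*real j/real (2*m)) ^ b)"
    if "a + b < 2 * m" for a b s
  proof -
    have "I a b = 2*pi/real (2*m) * (\<Sum>j<2*m. cos (s + 2*pi*real j/real (2*m)) ^ a * sin (s + 2*pi*real j/real (2*m)) ^ b)"
      using quad[OF N that, of s] unfolding I_def by (rule integral_unique)
    moreover have "2*pi/real (2*m) = pi / m" by simp
    ultimately show ?thesis by simp
  qed
  have hodd: "I a b = 0" if "odd (a + b)" for a b
    unfolding I_def using odd_zero[OF that] by (rule integral_unique)
  define A where "A th = (\<lambda>(a, b, d). c a b d * (sin th ^ (a + b) * cos th ^ d))" for th :: real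
  define B where "B ph = (\<lambda>(a::nat, b::nat, d::nat). cos ph ^ a * sin ph ^ b)" for ph :: real
  define J where "J = (\<lambda>(a::nat, b::nat, d::nat). I a b)"
  have sphAB: "sph T th ph = (\<Sum>i\<in>S. A th i * B ph i)" for th ph
    unfolding sph_expand[OF hc] by (intro sum.cong refl) (auto simp: A_def B_def split: prod.splits)
  define G where "G th = (\<Sum>i\<in>S. A th i * J i)" for th
  have hB: "((\<lambda>ph. B ph i) has_integral J i) {0..2*pi}" if "i \<in> S" for i
    using that hI Sab by (auto simp: B_def J_def split: prod.splits)
  have hBQ: "J i = pi / m * (\<Sum>j<2*m. B (s + 2*pi*real j/real (2*m)) i)" if "i \<in> S" for i s
    using that hQ Sab by (auto simp: B_def J_def split: prod.splits)
  have sphI: "((\<lambda>ph. sph T th ph) has_integral G th) {0..2*pi}" for th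
    unfolding sphAB G_def by (intro has_integral_sum finS has_integral_mult_right hB)
  have quadG: "pi / m * (\<Sum>j<2*m. sph T th (s + 2*pi*real j/real (2*m))) = G th" for th s
  proof -
    have "pi / m * (\<Sum>j<2*m. sph T th (s + 2*pi*real j/real (2*m)))
        = pi / m * (\<Sum>j<2*m. \<Sum>i\<in>S. A th i * B (s + 2*pi*real j/real (2*m)) i)"
      unfolding sphAB ..
    also have "\<dots> = (\<Sum>i\<in>S. A th i * (pi / m * (\<Sum>j<2*m. B (s + 2*pi*real j/real (2*m)) i)))"
      by (simp add: sum_distrib_left mult_ac) (rule sum.swap)
    also have "\<dots> = G th" unfolding G_def using hBQ by (intro sum.cong refl) simp
    finally show ?thesis .
  qed
  define PC where "PC = (\<lambda>(a::nat, b::nat, d::nat). c a b d * I a b)"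
  define PB where "PB = (\<lambda>(a::nat, b::nat, d::nat). [:1, 0, -1:] ^ ((a + b) div 2) * [:0, 1:] ^ d :: real poly)"
  define P where "P = (\<Sum>i\<in>S. smult (PC i) (PB i))"
  have GP: "G th = poly P (cos th)" for th
    unfolding G_def P_def poly_sum
  proof (intro sum.cong refl)
    fix i assume "i \<in> S"
    obtain a b d where i: "i = (a, b, d)" by (cases i)
    show "A th i * J i = poly (smult (PC i) (PB i)) (cos th)"
    proof (cases "even (a + b)")
      case True
      have "sin th ^ (a + b) = (sin th ^ 2) ^ ((a + b) div 2)"
        using True by (simp add: power_mult[symmetric])
      also have "\<dots> = (1 - cos th ^ 2) ^ ((a + b) div 2)" by (simp add: sin_squared_eq)
      finally have "sin th ^ (a + b) = (1 - cos th ^ 2) ^ ((a + b) div 2)" .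
      then show ?thesis unfolding i A_def J_def PC_def PB_def
        by (simp add: power2_eq_square algebra_simps)
    next
      case False
      then show ?thesis unfolding i A_def J_def PC_def PB_def using hodd by simp
    qed
  qed
  have degP: "degree P < 2 * m"
  proof -
    have "degree P \<le> 2 * m - 1"
      unfolding P_def
    proof (rule degree_sum_le[OF finS])
      fix i assume "i \<in> S"
      obtain a b d where i: "i = (a, b, d)" by (cases i)
      have "degree (smult (PC i) (PB i)) \<le> degree (PB i)" by (rule degree_smult_le)
      also have "\<dots> \<le> degree ([:1, 0, -1:] ^ ((a + b) div 2) :: real poly) + degree ([:0, 1:] ^ d :: real poly)"
        unfolding i PB_def by (simp add: degree_mult_le)
      also have "\<dots> \<le> degree ([:1, 0, -1:] :: real poly) * ((a + b) div 2) + degree ([:0, 1:] :: real poly) * d"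
        by (intro add_mono degree_power_le)
      also have "\<dots> \<le> a + b + d" by simp
      also have "\<dots> \<le> 2 * m - 1" using Sab(2) \<open>i \<in> S\<close> i by blast
      finally show "degree (smult (PC i) (PB i)) \<le> 2 * m - 1" .
    qed
    then show ?thesis using assms(1) by linarith
  qed
  have injc: "inj_on (\<lambda>k. cos (\<theta> k)) {1..2*m}"
  proof (rule inj_onI)
    fix x y assume xy: "x \<in> {1..2*m}" "y \<in> {1..2*m}" "cos (\<theta> x) = cos (\<theta> y)"
    have hx: "0 < \<theta> x \<and> \<theta> x < pi" using assms(2) xy(1) by blast
    have hy: "0 < \<theta> y \<and> \<theta> y < pi" using assms(2) xy(2) by blast
    have "\<theta> x = \<theta> y" by (rule cos_inj_pi) (use hx hy xy(3) in auto)
    then show "x = y" using assms(3) \<open>x \<in> {1..2*m}\<close> \<open>y \<in> {1..2*m}\<close> by (auto dest: inj_onD)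
  qed
  define L where "L i t = (\<Prod>k\<in>{1..2*m} - {i}. (t - cos (\<theta> k)) / (cos (\<theta> i) - cos (\<theta> k)))" for i t
  have Lcont: "continuous_on {-1..1} (L i)" for i
  proof -
    have "L i = (\<lambda>t. \<Prod>k\<in>{1..2*m} - {i}. (t - cos (\<theta> k)) * (1 / (cos (\<theta> i) - cos (\<theta> k))))"
      unfolding L_def by (rule ext) (simp only: times_divide_eq_right mult_1_right)
    moreover have "continuous_on {-1..1} (\<lambda>t. \<Prod>k\<in>{1..2*m} - {i}. (t - cos (\<theta> k)) * (1 / (cos (\<theta> i) - cos (\<theta> k))))"
      by (intro continuous_intros)
    ultimately show ?thesis by simp
  qed
  have intP: "integral {-1..1} (poly P) = (\<Sum>i\<in>{1..2*m}. poly P (cos (\<theta> i)) * integral {-1..1} (L i))"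
  proof -
    have "poly P = (\<lambda>t. \<Sum>i\<in>{1..2*m}. poly P (cos (\<theta> i)) * L i t)"
      using interp[OF injc degP] unfolding L_def by blast
    then have "integral {-1..1} (poly P) = integral {-1..1} (\<lambda>t. \<Sum>i\<in>{1..2*m}. poly P (cos (\<theta> i)) * L i t)"
      by simp
    also have "\<dots> = (\<Sum>i\<in>{1..2*m}. integral {-1..1} (\<lambda>t. poly P (cos (\<theta> i)) * L i t))"
      by (intro integral_sum finite_atLeastAtMost integrable_continuous_interval continuous_intros Lcont)
    also have "\<dots> = (\<Sum>i\<in>{1..2*m}. poly P (cos (\<theta> i)) * integral {-1..1} (L i))"
      by simp
    finally show ?thesis .
  qed
  have LHS: "sphere_integral T = integral {-1..1} (poly P)"
  proof -
    have "(\<lambda>th. integral {0..2*pi} (\<lambda>ph. sph T th ph * sin th)) = (\<lambda>th. poly P (cos th) * sin th)"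
    proof
      fix th
      show "integral {0..2*pi} (\<lambda>ph. sph T th ph * sin th) = poly P (cos th) * sin th"
      proof -
        have "((\<lambda>ph. sph T th ph * sin th) has_integral G th * sin th) {0..2*pi}"
          by (rule has_integral_mult_left[OF sphI])
        then have "integral {0..2*pi} (\<lambda>ph. sph T th ph * sin th) = G th * sin th" by (rule integral_unique)
        then show ?thesis using GP[of th] by simp
      qed
    qed
    then show ?thesis unfolding sphere_integral_def using subst_int by simp
  qed
  have node: "pi / m * (\<Sum>j=0..2*m-1. sph T th ((2 * real j + al) * pi / (2 * m))) = poly P (cos th)" for th al
  proof -
    have "{0..2*m-1} = {..<2*m}" using assms(1) by auto
    moreover have "(2 * real j + al) * pi / (2 * m) = al * pi / (2 * m) + 2*pi*real j/real (2*m)" for j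
      using assms(1) by (simp add: field_simps)
    ultimately have "(\<Sum>j=0..2*m-1. sph T th ((2 * real j + al) * pi / (2 * m))) =
        (\<Sum>j<2*m. sph T th (al * pi / (2 * m) + 2*pi*real j/real (2*m)))" by simp
    then show ?thesis using quadG[of th "al * pi / (2 * m)"] GP[of th] by simp
  qed
  have split: "{1..2*m} = {1..m} \<union> {m+1..2*m}" by auto
  have dist: "c0 * (\<Sum>i\<in>A. W i * S0 i) = (\<Sum>i\<in>A. W i * (c0 * S0 i))" for c0 :: real and A :: "nat set" and W S0
    by (simp add: sum_distrib_left mult_ac)
  have RHS1: "pi / m * (\<Sum>i=1..m. integral {-1..1} (L i) * (\<Sum>j=0..2*m-1. sph T (\<theta> i) ((2 * real j + 0) * pi / (2 * m))))
      = (\<Sum>i=1..m. poly P (cos (\<theta> i)) * integral {-1..1} (L i))"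
    unfolding dist node by (simp add: mult.commute)
  have RHS2: "pi / m * (\<Sum>i=m+1..2*m. integral {-1..1} (L i) * (\<Sum>j=0..2*m-1. sph T (\<theta> i) ((2 * real j + 1) * pi / (2 * m))))
      = (\<Sum>i=m+1..2*m. poly P (cos (\<theta> i)) * integral {-1..1} (L i))"
    unfolding dist node by (simp add: mult.commute)
  have "(\<Sum>i\<in>{1..2*m}. poly P (cos (\<theta> i)) * integral {-1..1} (L i)) =
      (\<Sum>i=1..m. poly P (cos (\<theta> i)) * integral {-1..1} (L i)) + (\<Sum>i=m+1..2*m. poly P (cos (\<theta> i)) * integral {-1..1} (L i))"
    unfolding split by (rule sum.union_disjoint) auto
  then have "sphere_integral T =
      pi / m * (\<Sum>i=1..m. integral {-1..1} (L i) * (\<Sum>j=0..2*m-1. sph T (\<theta> i) ((2 * real j + 0) * pi / (2 * m))))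
    + pi / m * (\<Sum>i=m+1..2*m. integral {-1..1} (L i) * (\<Sum>j=0..2*m-1. sph T (\<theta> i) ((2 * real j + 1) * pi / (2 * m))))"
    unfolding RHS1 RHS2 LHS intP .
  then show ?thesis unfolding L_def .
qed

end
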